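(* Let $G:[0,1]\to\mathbb R$ be strictly convex and differentiable on $(0,1)$ and let $\mathcal I=(\Omega,\mathbb P,\mathcal S,\mathcal T,Y)$ be any information structure. Let $I_1,\dots,I_N$ be a partition of $[0,1]$ into intervals; for $u\in[0,1]$ let $k(u)$ be the index with $u\in I_{k(u)}$, let $S^{(k)}:=\{\sigma'\in\mathcal S:\mu_{\sigma'}\in I_k\}$, and write $k(\sigma):=k(\mu_\sigma)$, $k(\tau):=k(\mu_\tau)$. Let $Q=\mathbb P(k(\sigma)\ne k(\tau))$. Then $\mathbb E\big[D_G(\mu_{S^{(k(\sigma))}\tau}\parallel\mu_\tau)\big]\le 2\tilde G^*(Q)$, where $\mu_{S^{(k(\sigma))}\tau}=\mathbb E[Y\mid \sigma\in S^{(k(\sigma))},\tau]$, i.e. the expectation of $Y$ given $\tau$ and the index $k(\sigma)$.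
   Context: An information structure is a tuple $(\Omega,\mathbb P,\mathcal S,\mathcal T,Y)$: a probability space, random variables $\sigma:\Omega\to\mathcal S$, $\tau:\Omega\to\mathcal T$, $Y:\Omega\to[0,1]$. $\mu_\sigma=\mathbb E[Y\mid\sigma]$, $\mu_\tau=\mathbb E[Y\mid\tau]$, and for measurable $S\subseteq\mathcal S$, $\mu_{S\tau}=\mathbb E[Y\mid\sigma\in S,\tau]$. $D_G(y\parallel x)=G(y)-G(x)-(y-x)G'(x)$. For $x\ge0$, $\tilde G(x):=\max_{a,b\in[0,1],\,|a-b|\le x}(G(a)-G(b))$ (so $\tilde G(x)=\sup G-\inf G$ for $x\ge1$), and $\tilde G^*$ is the smallest concave function on $[0,\infty)$ that is $\ge\tilde G$. *)

theory Defs
  imports "HOL-Probability.Probability"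
begin

definition strictly_convex_on :: "real set \<Rightarrow> (real \<Rightarrow> real) \<Rightarrow> bool" where
  "strictly_convex_on A G \<longleftrightarrow>
     (\<forall>x\<in>A. \<forall>y\<in>A. \<forall>t. x \<noteq> y \<and> 0 < t \<and> t < 1 \<longrightarrow>
        G ((1 - t) * x + t * y) < (1 - t) * G x + t * G y)"

definition bregman :: "(real \<Rightarrow> real) \<Rightarrow> real \<Rightarrow> real \<Rightarrow> real" where
  "bregman G y x = G y - G x - (y - x) * deriv G x"

definition Gtilde :: "(real \<Rightarrow> real) \<Rightarrow> real \<Rightarrow> real" where
  "Gtilde G x = Sup {G a - G b | a b. a \<in> {0..1} \<and> b \<in> {0..1} \<and> \<bar>a - b\<bar> \<le> x}"

definition Gtilde_star :: "(real \<Rightarrow> real) \<Rightarrow> real \<Rightarrow> real" where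
  "Gtilde_star G x = Inf {h x | h. concave_on {0..} h \<and> (\<forall>t\<ge>0. Gtilde G t \<le> h t)}"

definition kidx :: "(nat \<Rightarrow> real set) \<Rightarrow> nat \<Rightarrow> real \<Rightarrow> nat" where
  "kidx I N u = (THE k. k < N \<and> u \<in> I k)"

end

theory Submission
  imports Defs
begin

lemma sc_convex:
  assumes "strictly_convex_on {0..1} G"
  shows "convex_on {0..1::real} G"
proof (rule convex_onI)
  fix t x y :: real assume t: "0 < t" "t < 1" and xy: "x \<in> {0..1}" "y \<in> {0..1}"
  show "G ((1 - t) *\<^sub>R x + t *\<^sub>R y) \<le> (1 - t) * G x + t * G y"
  proof (cases "x = y")
    case True then show ?thesis by (simp add: algebra_simps)
  next
    case False
    then show ?thesis using assms t xy unfolding strictly_convex_on_def by (auto intro!: less_imp_le)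
  qed
qed simp

lemma G_bounded:
  assumes "convex_on {0..1::real} G"
  obtains B where "B \<ge> 0" "\<And>x. x \<in> {0..1} \<Longrightarrow> \<bar>G x\<bar> \<le> B"
proof -
  define U where "U = max (G 0) (G 1)"
  have up: "G x \<le> U" if "x \<in> {0..1}" for x
  proof -
    have "G ((1 - x) *\<^sub>R 0 + x *\<^sub>R 1) \<le> (1 - x) * G 0 + x * G 1"
      using convex_onD[OF assms, of x 0 1] that by auto
    also have "\<dots> \<le> (1 - x) * U + x * U"
      using that by (intro add_mono mult_left_mono) (auto simp: U_def)
    finally show ?thesis by (simp add: algebra_simps)
  qed
  have lo: "G x \<ge> 2 * G (1/2) - U" if "x \<in> {0..1}" for x
  proof -
    have a: "G ((1 - 1/2) *\<^sub>R x + (1/2) *\<^sub>R (1 - x)) \<le> (1 - 1/2) * G x + (1/2) * G (1 - x)"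
      using convex_onD[OF assms, of "1/2" x "1 - x"] that by auto
    have e: "(1 - 1/2) *\<^sub>R x + (1/2) *\<^sub>R (1 - x) = (1/2::real)" by (simp add: field_simps)
    have "G (1/2) \<le> (1 - 1/2) * G x + (1/2) * G (1 - x)" using a unfolding e .
    moreover have "G (1 - x) \<le> U" using up[of "1 - x"] that by auto
    ultimately show ?thesis by simp
  qed
  show ?thesis
    apply (rule that[of "\<bar>U\<bar> + \<bar>2 * G (1/2) - U\<bar>"])
     apply simp
    using up lo by (smt (verit))
qed

lemma Gtilde_upper:
  assumes "\<And>x. x \<in> {0..1} \<Longrightarrow> \<bar>G x\<bar> \<le> B"
    and "a \<in> {0..1}" "b \<in> {0..1}" "\<bar>a - b\<bar> \<le> x"
  shows "G a - G b \<le> Gtilde G x"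
  unfolding Gtilde_def
proof (rule cSup_upper)
  show "G a - G b \<in> {G a - G b |a b. a \<in> {0..1} \<and> b \<in> {0..1} \<and> \<bar>a - b\<bar> \<le> x}"
    using assms by blast
  show "bdd_above {G a - G b |a b. a \<in> {0..1} \<and> b \<in> {0..1} \<and> \<bar>a - b\<bar> \<le> x}"
  proof (rule bdd_aboveI)
    fix y assume "y \<in> {G a - G b |a b. a \<in> {0..1} \<and> b \<in> {0..1} \<and> \<bar>a - b\<bar> \<le> x}"
    then obtain a b where "y = G a - G b" "a \<in> {0..1}" "b \<in> {0..1}" by blast
    then show "y \<le> 2 * B" using assms(1)[of a] assms(1)[of b] by linarith
  qed
qed

lemma Gtilde_nonneg:
  assumes "\<And>x. x \<in> {0..1} \<Longrightarrow> \<bar>G x\<bar> \<le> B" and "0 \<le> x"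
  shows "0 \<le> Gtilde G x"
  using Gtilde_upper[OF assms(1), where a=0 and b=0 and x=x] assms by simp

lemma Gtilde_le:
  assumes "\<And>x. x \<in> {0..1} \<Longrightarrow> \<bar>G x\<bar> \<le> B" and "0 \<le> x"
  shows "Gtilde G x \<le> 2 * B"
  unfolding Gtilde_def
proof (rule cSup_least)
  show "{G a - G b |a b. a \<in> {0..1} \<and> b \<in> {0..1} \<and> \<bar>a - b\<bar> \<le> x} \<noteq> {}"
    using assms by force
  fix y assume "y \<in> {G a - G b |a b. a \<in> {0..1} \<and> b \<in> {0..1} \<and> \<bar>a - b\<bar> \<le> x}"
  then obtain a b where "y = G a - G b" "a \<in> {0..1}" "b \<in> {0..1}" by blast
  then show "y \<le> 2 * B" using assms(1)[of a] assms(1)[of b] by linarith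
qed

lemma kidx_eq:
  assumes "disjoint_family_on I {..<N}" "k < N" "u \<in> I k"
  shows "kidx I N u = k"
  unfolding kidx_def
proof (rule the_equality)
  show "k < N \<and> u \<in> I k" using assms by simp
  fix j assume "j < N \<and> u \<in> I j"
  then show "j = k" using assms unfolding disjoint_family_on_def by blast
qed

lemma kidx_out:
  assumes "(\<Union>k<N. I k) = {0..1::real}" "u \<notin> {0..1}"
  shows "kidx I N u = (THE k::nat. False)"
proof -
  have "(\<lambda>k. k < N \<and> u \<in> I k) = (\<lambda>k. False)" using assms by blast
  then show ?thesis unfolding kidx_def by simp
qed

lemma kidx_measurable:
  assumes "\<And>k. k < N \<Longrightarrow> is_interval (I k)"
    and "disjoint_family_on I {..<N}"
    and "(\<Union>k<N. I k) = {0..1::real}"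
  shows "kidx I N \<in> measurable borel (count_space UNIV)"
  unfolding measurable_count_space_eq2_countable
proof (intro conjI ballI)
  show "kidx I N \<in> space borel \<rightarrow> UNIV" by simp
  fix n :: nat
  define c where "c = (THE k::nat. False)"
  have "kidx I N -` {n} = ({0..1} \<inter> (if n < N then I n else {})) \<union> (- {0..1} \<inter> (if c = n then UNIV else {}))"
  proof (intro set_eqI iffI)
    fix u assume u: "u \<in> kidx I N -` {n}"
    show "u \<in> ({0..1} \<inter> (if n < N then I n else {})) \<union> (- {0..1} \<inter> (if c = n then UNIV else {}))"
    proof (cases "u \<in> {0..1}")
      case True
      then obtain k where k: "k < N" "u \<in> I k" using assms(3) by blast
      then have "kidx I N u = k" using kidx_eq assms(2) by blast
      then show ?thesis using u k True by auto
    next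
      case False
      then show ?thesis using u kidx_out[OF assms(3) False] by (auto simp: c_def)
    qed
  next
    fix u assume u: "u \<in> ({0..1} \<inter> (if n < N then I n else {})) \<union> (- {0..1} \<inter> (if c = n then UNIV else {}))"
    show "u \<in> kidx I N -` {n}"
    proof (cases "u \<in> {0..1}")
      case True
      then have "n < N" "u \<in> I n" using u by (auto split: if_splits)
      then show ?thesis using kidx_eq assms(2) by auto
    next
      case False
      then show ?thesis using u kidx_out[OF assms(3) False] by (auto simp: c_def split: if_splits)
    qed
  qed
  moreover have "I n \<in> sets borel" if "n < N" using assms(1)[OF that] real_interval_borel_measurable by blast
  ultimately show "kidx I N -` {n} \<inter> space borel \<in> sets borel" by auto
qed

lemma vimage_subalg:
  assumes "prob_space M" and "f \<in> measurable M N"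
  shows "sigma_finite_subalgebra M (vimage_algebra (space M) f N)"
proof -
  interpret prob_space M by fact
  have "subalgebra M (vimage_algebra (space M) f N)"
    unfolding subalgebra_def
  proof
    show "space (vimage_algebra (space M) f N) = space M" by simp
    show "sets (vimage_algebra (space M) f N) \<subseteq> sets M"
      using assms(2) by (auto simp: sets_vimage_algebra2 measurable_def)
  qed
  then have "finite_measure_subalgebra M (vimage_algebra (space M) f N)"
    unfolding finite_measure_subalgebra_def finite_measure_subalgebra_axioms_def
    using finite_measure_axioms by simp
  then show ?thesis by (rule finite_measure_subalgebra_is_sigma_finite)
qed

lemma bint:
  fixes f :: "'a \<Rightarrow> real"
  assumes "finite_measure M" "f \<in> borel_measurable M" "AE x in M. \<bar>f x\<bar> \<le> B"
  shows "integrable M f"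
  using finite_measure.integrable_const_bound[OF assms(1), of f B] assms by simp

lemma core:
  assumes P: "prob_space M" and sF: "sigma_finite_subalgebra M F" and sH: "sigma_finite_subalgebra M H"
   and FH: "sets F \<subseteq> sets H"
   and Ym[measurable]: "Y \<in> borel_measurable M" and Yb: "\<And>w. w\<in>space M \<Longrightarrow> 0 \<le> Y w \<and> Y w \<le> 1"
   and EH: "E \<in> sets H"
   and tr: "\<And>A. A \<in> sets H \<Longrightarrow> \<exists>B\<in>sets F. A \<inter> E = B \<inter> E"
  shows "AE w in M. w \<in> E \<longrightarrow> \<bar>real_cond_exp M H Y w - real_cond_exp M F Y w\<bar> \<le> real_cond_exp M F (indicator (space M - E)) w"
proof -
  interpret prob_space M by fact
  interpret F: sigma_finite_subalgebra M F by fact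
  interpret H: sigma_finite_subalgebra M H by fact
  have fm: "finite_measure M" by (simp add: finite_measure_axioms)
  have spF: "space F = space M" and spH: "space H = space M" using F.subalg H.subalg by (auto simp: subalgebra_def)
  have sHM: "sets H \<subseteq> sets M" using H.subalg unfolding subalgebra_def by auto
  have sFM: "sets F \<subseteq> sets M" using F.subalg unfolding subalgebra_def by auto
  have EM[measurable]: "E \<in> sets M" using EH sHM by auto
  have measFH: "f \<in> borel_measurable H" if "f \<in> borel_measurable F" for f :: "_ \<Rightarrow> real"
    using measurable_mono[of borel borel F H] FH spF spH that by auto
  have measHM: "f \<in> borel_measurable M" if "f \<in> borel_measurable H" for f :: "_ \<Rightarrow> real"
    using measurable_from_subalg[OF H.subalg that] .
  have measFM: "f \<in> borel_measurable M" if "f \<in> borel_measurable F" for f :: "_ \<Rightarrow> real"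
    using measurable_from_subalg[OF F.subalg that] .
  define Z where "Z = real_cond_exp M H Y"
  define m where "m = real_cond_exp M F Y"
  define p where "p = real_cond_exp M F (indicator E)"
  define q where "q = real_cond_exp M F (indicator (space M - E))"
  define ZF where "ZF = real_cond_exp M F (\<lambda>w. Y w * indicator E w)"
  define R where "R = real_cond_exp M F (\<lambda>w. Y w * indicator (space M - E) w)"
  have ZH: "Z \<in> borel_measurable H" and ZM[measurable]: "Z \<in> borel_measurable M" unfolding Z_def by auto
  have pF: "p \<in> borel_measurable F" "q \<in> borel_measurable F" "ZF \<in> borel_measurable F" "m \<in> borel_measurable F"
    unfolding p_def q_def ZF_def m_def by auto
  have [measurable]: "p \<in> borel_measurable M" "q \<in> borel_measurable M" "ZF \<in> borel_measurable M" "m \<in> borel_measurable M"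
    "R \<in> borel_measurable M"
    unfolding p_def q_def ZF_def m_def R_def by auto
  have iY: "integrable M Y" by (rule bint[OF fm Ym, of 1]) (use Yb in auto)
  have iE: "integrable M (indicator E :: _ \<Rightarrow> real)" by (rule bint[OF fm, of _ 1]) auto
  have iEc: "integrable M (indicator (space M - E) :: _ \<Rightarrow> real)" by (rule bint[OF fm, of _ 1]) auto
  have iYE: "integrable M (\<lambda>w. Y w * indicator E w)" by (rule bint[OF fm, of _ 1]) (use Yb in \<open>auto simp: indicator_def\<close>)
  have iYEc: "integrable M (\<lambda>w. Y w * indicator (space M - E) w)" by (rule bint[OF fm, of _ 1]) (use Yb in \<open>auto simp: indicator_def\<close>)
  have Zb: "AE w in M. 0 \<le> Z w \<and> Z w \<le> 1"
    using H.real_cond_exp_ge_c[OF iY, of 0] H.real_cond_exp_le_c[OF iY, of 1] Yb unfolding Z_def by auto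
  have mb: "AE w in M. 0 \<le> m w \<and> m w \<le> 1"
    using F.real_cond_exp_ge_c[OF iY, of 0] F.real_cond_exp_le_c[OF iY, of 1] Yb unfolding m_def by auto
  have pb: "AE w in M. 0 \<le> p w \<and> p w \<le> 1"
    using F.real_cond_exp_ge_c[OF iE, of 0] F.real_cond_exp_le_c[OF iE, of 1] unfolding p_def by auto
  have qb: "AE w in M. 0 \<le> q w \<and> q w \<le> 1"
    using F.real_cond_exp_ge_c[OF iEc, of 0] F.real_cond_exp_le_c[OF iEc, of 1] unfolding q_def by auto
  have ZFb: "AE w in M. 0 \<le> ZF w \<and> ZF w \<le> 1"
    using F.real_cond_exp_ge_c[OF iYE, of 0] F.real_cond_exp_le_c[OF iYE, of 1] Yb unfolding ZF_def
    by (auto simp: indicator_def)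
  have Rb: "AE w in M. 0 \<le> R w \<and> R w \<le> q w"
  proof -
    have "AE w in M. 0 \<le> R w"
      using F.real_cond_exp_ge_c[OF iYEc, of 0] Yb unfolding R_def by (auto simp: indicator_def)
    moreover have "AE w in M. R w \<le> q w"
      unfolding R_def q_def by (rule F.real_cond_exp_mono[OF _ iYEc iEc]) (use Yb in \<open>auto simp: indicator_def\<close>)
    ultimately show ?thesis by eventually_elim auto
  qed
  have pq: "AE w in M. p w + q w = 1"
  proof -
    have 1: "AE w in M. real_cond_exp M F (\<lambda>w. indicator E w + indicator (space M - E) w) w = p w + q w"
      unfolding p_def q_def by (rule F.real_cond_exp_add[OF iE iEc])
    have 2: "AE w in M. real_cond_exp M F (\<lambda>w. indicator E w + indicator (space M - E) w) w = real_cond_exp M F (\<lambda>w. 1) w"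
      by (rule F.real_cond_exp_cong) (auto simp: indicator_def)
    have 3: "AE w in M. real_cond_exp M F (\<lambda>w. 1) w = 1"
      by (rule F.real_cond_exp_F_meas) auto
    from 1 2 3 show ?thesis by eventually_elim auto
  qed
  have mZR: "AE w in M. m w = ZF w + R w"
  proof -
    have 1: "AE w in M. real_cond_exp M F (\<lambda>w. Y w * indicator E w + Y w * indicator (space M - E) w) w = ZF w + R w"
      unfolding ZF_def R_def by (rule F.real_cond_exp_add[OF iYE iYEc])
    have 2: "AE w in M. real_cond_exp M F (\<lambda>w. Y w * indicator E w + Y w * indicator (space M - E) w) w = m w"
      unfolding m_def by (rule F.real_cond_exp_cong) (auto simp: indicator_def)
    from 1 2 show ?thesis by eventually_elim auto
  qed
  have iH: "integrable M f" if "f \<in> borel_measurable M" "AE w in M. \<bar>f w\<bar> \<le> 1" for f :: "_ \<Rightarrow> real"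
    using bint[OF fm that] .
  have key: "AE w in M. p w * Z w * indicator E w = ZF w * indicator E w"
  proof -
    define f where "f = (\<lambda>w. p w * Z w * indicator E w)"
    define g where "g = (\<lambda>w. ZF w * indicator E w)"
    have fH: "f \<in> borel_measurable H" unfolding f_def
      by (intro borel_measurable_times measFH[OF pF(1)] ZH borel_measurable_indicator[OF EH])
    have gH: "g \<in> borel_measurable H" unfolding g_def
      by (intro borel_measurable_times measFH[OF pF(3)] borel_measurable_indicator[OF EH])
    have [measurable]: "f \<in> borel_measurable M" "g \<in> borel_measurable M" using measHM[OF fH] measHM[OF gH] by auto
    have fi: "integrable M f"
      by (rule iH[OF \<open>f \<in> borel_measurable M\<close>]) (use pb Zb in \<open>eventually_elim, simp add: f_def indicator_def abs_mult mult_le_one\<close>)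
    have gi: "integrable M g"
      by (rule iH[OF \<open>g \<in> borel_measurable M\<close>]) (use ZFb in \<open>eventually_elim, simp add: g_def indicator_def abs_mult\<close>)
    have "AE w in M. real_cond_exp M H f w = g w"
    proof (rule H.real_cond_exp_charact[OF _ fi gi gH])
      fix A assume A: "A \<in> sets H"
      obtain B where B: "B \<in> sets F" "A \<inter> E = B \<inter> E" using tr[OF A] by blast
      have BM[measurable]: "B \<in> sets M" using B sFM by auto
      have AM[measurable]: "A \<in> sets M" using A sHM by auto
      have ind: "indicator A w * indicator E w = (indicator B w * indicator E w :: real)" for w
        by (simp only: indicator_inter_arith[symmetric] B(2))
      have bF: "(\<lambda>w. indicator B w * p w) \<in> borel_measurable F"
        by (intro borel_measurable_times pF(1) borel_measurable_indicator[OF B(1)])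
      have bF2: "(\<lambda>w. indicator B w * ZF w) \<in> borel_measurable F"
        by (intro borel_measurable_times pF(3) borel_measurable_indicator[OF B(1)])
      have bH: "(\<lambda>w. indicator B w * p w * indicator E w) \<in> borel_measurable H"
        by (intro borel_measurable_times measFH[OF bF] borel_measurable_indicator[OF EH])
      have e1: "indicator A w *\<^sub>R f w = (indicator B w * p w * indicator E w) * Z w" for w
      proof -
        have "indicator A w *\<^sub>R f w = (indicator A w * indicator E w) * (p w * Z w)"
          by (simp add: f_def mult_ac)
        also have "\<dots> = (indicator B w * indicator E w) * (p w * Z w)" by (simp only: ind)
        also have "\<dots> = (indicator B w * p w * indicator E w) * Z w" by (simp add: mult_ac)
        finally show ?thesis .
      qed
      have e2: "indicator A w *\<^sub>R g w = (indicator B w * ZF w) * indicator E w" for w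
      proof -
        have "indicator A w *\<^sub>R g w = (indicator A w * indicator E w) * ZF w"
          by (simp add: g_def mult_ac)
        also have "\<dots> = (indicator B w * indicator E w) * ZF w" by (simp only: ind)
        also have "\<dots> = (indicator B w * ZF w) * indicator E w" by (simp add: mult_ac)
        finally show ?thesis .
      qed
      have i1: "integrable M (\<lambda>w. (indicator B w * p w * indicator E w) * Y w)"
        by (rule iH, measurable) (use pb AE_space in \<open>eventually_elim, use Yb in \<open>simp add: indicator_def abs_mult mult_le_one\<close>\<close>)
      have i2: "integrable M (\<lambda>w. (indicator B w * p w) * (Y w * indicator E w))"
        by (rule iH, measurable) (use pb AE_space in \<open>eventually_elim, use Yb in \<open>simp add: indicator_def abs_mult mult_le_one\<close>\<close>)
      have i3: "integrable M (\<lambda>w. (indicator B w * ZF w) * indicator E w)"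
        by (rule iH, measurable) (use ZFb in \<open>eventually_elim, simp add: indicator_def abs_mult\<close>)
      have "(\<integral>w\<in>A. f w \<partial>M) = (\<integral>w. (indicator B w * p w * indicator E w) * Z w \<partial>M)"
        unfolding set_lebesgue_integral_def e1 ..
      also have "\<dots> = (\<integral>w. (indicator B w * p w * indicator E w) * Y w \<partial>M)"
        unfolding Z_def by (rule H.real_cond_exp_intg(2)[OF i1 bH Ym])
      also have "\<dots> = (\<integral>w. (indicator B w * p w) * (Y w * indicator E w) \<partial>M)"
        by (simp add: mult_ac)
      also have "\<dots> = (\<integral>w. (indicator B w * p w) * ZF w \<partial>M)"
        unfolding ZF_def by (rule F.real_cond_exp_intg(2)[symmetric, OF i2 bF], measurable)
      also have "\<dots> = (\<integral>w. (indicator B w * ZF w) * p w \<partial>M)"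
        by (simp add: mult_ac)
      also have "\<dots> = (\<integral>w. (indicator B w * ZF w) * indicator E w \<partial>M)"
        unfolding p_def by (rule F.real_cond_exp_intg(2)[OF i3 bF2], measurable)
      also have "\<dots> = (\<integral>w\<in>A. g w \<partial>M)"
        unfolding set_lebesgue_integral_def e2 ..
      finally show "(\<integral>w\<in>A. f w \<partial>M) = (\<integral>w\<in>A. g w \<partial>M)" .
    qed
    moreover have "AE w in M. real_cond_exp M H f w = f w"
      by (rule H.real_cond_exp_F_meas[OF fi fH])
    ultimately show ?thesis unfolding f_def g_def by eventually_elim auto
  qed
  have "AE w in M. w \<in> E \<longrightarrow> \<bar>Z w - m w\<bar> \<le> q w"
    using key pq mZR Rb Zb qb
  proof eventually_elim
    case (elim w)
    show ?case
    proof
      assume wE: "w \<in> E"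
      have 1: "p w * Z w = ZF w" using elim(1) wE by simp
      have 2: "q w * Z w \<le> q w" using elim(5,6) by (simp add: mult_left_le)
      have 3: "0 \<le> q w * Z w" using elim(5,6) by simp
      have p': "p w = 1 - q w" using elim(2) by linarith
      have 4: "ZF w = Z w - q w * Z w" using 1 unfolding p' by (simp add: algebra_simps)
      have "m w - Z w = R w - q w * Z w" using 4 elim(3) by linarith
      then show "\<bar>Z w - m w\<bar> \<le> q w" using 2 3 elim(4) by linarith
    qed
  qed
  then show ?thesis unfolding Z_def m_def q_def .
qed

lemma boundary:
  assumes P: "prob_space M" and sF: "sigma_finite_subalgebra M F" and sH: "sigma_finite_subalgebra M H"
   and FH: "sets F \<subseteq> sets H"
   and Ym[measurable]: "Y \<in> borel_measurable M" and Yb: "\<And>w. w\<in>space M \<Longrightarrow> 0 \<le> Y w \<and> Y w \<le> 1"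
  shows "AE w in M. (real_cond_exp M F Y w = 0 \<longrightarrow> real_cond_exp M H Y w = 0)
                  \<and> (real_cond_exp M F Y w = 1 \<longrightarrow> real_cond_exp M H Y w = 1)"
proof -
  interpret prob_space M by fact
  interpret F: sigma_finite_subalgebra M F by fact
  interpret H: sigma_finite_subalgebra M H by fact
  have fm: "finite_measure M" by (simp add: finite_measure_axioms)
  have spF: "space F = space M" and spH: "space H = space M" using F.subalg H.subalg by (auto simp: subalgebra_def)
  have sFM: "sets F \<subseteq> sets M" using F.subalg unfolding subalgebra_def by auto
  define Z where "Z = real_cond_exp M H Y"
  define m where "m = real_cond_exp M F Y"
  have [measurable]: "Z \<in> borel_measurable M" "m \<in> borel_measurable M" unfolding Z_def m_def by auto
  have mF: "m \<in> borel_measurable F" unfolding m_def by auto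
  have iY: "integrable M Y" by (rule bint[OF fm Ym, of 1]) (use Yb in auto)
  have Zb: "AE w in M. 0 \<le> Z w \<and> Z w \<le> 1"
    using H.real_cond_exp_ge_c[OF iY, of 0] H.real_cond_exp_le_c[OF iY, of 1] Yb unfolding Z_def by auto
  have iZ: "integrable M Z" unfolding Z_def by (rule H.real_cond_exp_int(1)[OF iY])
  have im: "integrable M m" unfolding m_def by (rule F.real_cond_exp_int(1)[OF iY])
  have eqA: "(\<integral>w. indicator A w * Z w \<partial>M) = (\<integral>w. indicator A w * m w \<partial>M)" if A: "A \<in> sets F" for A
  proof -
    have AM[measurable]: "A \<in> sets M" using A sFM by auto
    have iAY: "integrable M (\<lambda>w. indicator A w * Y w)"
      by (rule bint[OF fm, of _ 1], measurable) (use Yb in \<open>auto simp: indicator_def\<close>)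
    have "(\<integral>w. indicator A w * Z w \<partial>M) = (\<integral>w. indicator A w * Y w \<partial>M)"
      unfolding Z_def by (rule H.real_cond_exp_intg(2)[OF iAY _ Ym]) (use A FH in auto)
    also have "\<dots> = (\<integral>w. indicator A w * m w \<partial>M)"
      unfolding m_def by (rule F.real_cond_exp_intg(2)[symmetric, OF iAY _ Ym]) (use A in auto)
    finally show ?thesis .
  qed
  define A0 where "A0 = {w \<in> space M. m w = 0}"
  define A1 where "A1 = {w \<in> space M. m w = 1}"
  have A0F: "A0 \<in> sets F"
  proof -
    have "m -` {0} \<inter> space F \<in> sets F" by (rule measurable_sets[OF mF]) simp
    moreover have "m -` {0} \<inter> space F = A0" by (auto simp: A0_def spF)
    ultimately show ?thesis by simp
  qed
  have A1F: "A1 \<in> sets F"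
  proof -
    have "m -` {1} \<inter> space F \<in> sets F" by (rule measurable_sets[OF mF]) simp
    moreover have "m -` {1} \<inter> space F = A1" by (auto simp: A1_def spF)
    ultimately show ?thesis by simp
  qed
  have [measurable]: "A0 \<in> sets M" "A1 \<in> sets M" using A0F A1F sFM by auto
  have "AE w in M. indicator A0 w * Z w = 0"
  proof -
    have "(\<integral>w. indicator A0 w * Z w \<partial>M) = (\<integral>w. indicator A0 w * m w \<partial>M)" by (rule eqA[OF A0F])
    also have "\<dots> = 0"
    proof -
      have "(\<lambda>w. indicator A0 w * m w) = (\<lambda>w. 0::real)" by (auto simp: A0_def indicator_def)
      then show ?thesis by simp
    qed
    finally have "(\<integral>w. indicator A0 w * Z w \<partial>M) = 0" .
    moreover have "integrable M (\<lambda>w. indicator A0 w * Z w)" using integrable_mult_indicator[OF _ iZ] by simp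
    moreover have "AE w in M. 0 \<le> indicator A0 w * Z w" using Zb by eventually_elim simp
    ultimately show ?thesis using integral_nonneg_eq_0_iff_AE by blast
  qed
  moreover have "AE w in M. indicator A1 w * (1 - Z w) = 0"
  proof -
    have iA1: "integrable M (indicator A1 :: _ \<Rightarrow> real)" by (rule bint[OF fm, of _ 1]) auto
    have i1: "integrable M (\<lambda>w. indicator A1 w * Z w)" using integrable_mult_indicator[OF _ iZ] by simp
    have i2: "integrable M (\<lambda>w. indicator A1 w * m w)" using integrable_mult_indicator[OF _ im] by simp
    have "(\<integral>w. indicator A1 w * (1 - Z w) \<partial>M) = (\<integral>w. indicator A1 w - indicator A1 w * Z w \<partial>M)"
      by (simp add: algebra_simps)
    also have "\<dots> = (\<integral>w. indicator A1 w \<partial>M) - (\<integral>w. indicator A1 w * Z w \<partial>M)"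
      by (rule Bochner_Integration.integral_diff[OF iA1 i1])
    also have "\<dots> = (\<integral>w. indicator A1 w \<partial>M) - (\<integral>w. indicator A1 w * m w \<partial>M)" by (simp add: eqA[OF A1F])
    also have "\<dots> = (\<integral>w. indicator A1 w - indicator A1 w * m w \<partial>M)"
      by (rule Bochner_Integration.integral_diff[OF iA1 i2, symmetric])
    also have "\<dots> = 0"
    proof -
      have "(\<lambda>w. indicator A1 w - indicator A1 w * m w) = (\<lambda>w. 0::real)" by (auto simp: A1_def indicator_def)
      then show ?thesis by simp
    qed
    finally have "(\<integral>w. indicator A1 w * (1 - Z w) \<partial>M) = 0" .
    moreover have "integrable M (\<lambda>w. indicator A1 w * (1 - Z w))"
      by (rule bint[OF fm, of _ 1], measurable) (use Zb in \<open>eventually_elim, auto simp: indicator_def\<close>)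
    moreover have "AE w in M. 0 \<le> indicator A1 w * (1 - Z w)" using Zb by eventually_elim simp
    ultimately show ?thesis using integral_nonneg_eq_0_iff_AE by blast
  qed
  moreover note AE_space
  ultimately have "AE w in M. (m w = 0 \<longrightarrow> Z w = 0) \<and> (m w = 1 \<longrightarrow> Z w = 1)"
  proof eventually_elim
    case (elim w)
    show ?case
    proof (intro conjI impI)
      assume "m w = 0" then have "w \<in> A0" using elim(3) by (simp add: A0_def)
      then show "Z w = 0" using elim(1) by simp
    next
      assume "m w = 1" then have "w \<in> A1" using elim(3) by (simp add: A1_def)
      then show "Z w = 1" using elim(2) by simp
    qed
  qed
  then show ?thesis unfolding Z_def m_def .
qed

lemma tang:
  assumes cv: "convex_on {0..1::real} G" and d: "\<And>x. x \<in> {0<..<1} \<Longrightarrow> G differentiable (at x)"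
    and x: "x \<in> {0<..<1}" and y: "y \<in> {0..1}"
  shows "deriv G x * (y - x) \<le> G y - G x"
proof (rule convex_on_imp_above_tangent[OF cv])
  show "connected {0..1::real}" by simp
  show "x \<in> interior {0..1}" using x by simp
  show "y \<in> {0..1}" by fact
  have "(G has_field_derivative deriv G x) (at x)"
    using d[OF x] DERIV_deriv_iff_real_differentiable by blast
  then show "(G has_field_derivative deriv G x) (at x within {0..1})"
    by (rule has_field_derivative_at_within)
qed

lemma deriv_mono:
  assumes cv: "convex_on {0..1::real} G" and d: "\<And>x. x \<in> {0<..<1} \<Longrightarrow> G differentiable (at x)"
  shows "mono_on {0<..<1} (deriv G)"
proof (rule mono_onI)
  fix x y :: real assume xy: "x \<in> {0<..<1}" "y \<in> {0<..<1}" "x \<le> y"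
  have 1: "deriv G x * (y - x) \<le> G y - G x" using tang[OF cv d xy(1)] xy by auto
  have 2: "deriv G y * (x - y) \<le> G x - G y" using tang[OF cv d xy(2)] xy by auto
  have "(deriv G y - deriv G x) * (y - x) \<ge> 0" using 1 2 by (simp add: algebra_simps)
  then show "deriv G x \<le> deriv G y"
    using xy(3) by (cases "x = y") (auto simp: zero_le_mult_iff)
qed

definition dG :: "(real \<Rightarrow> real) \<Rightarrow> real \<Rightarrow> real" where
  "dG G x = indicator {0<..<1} x * deriv G x"

definition Gc :: "(real \<Rightarrow> real) \<Rightarrow> real \<Rightarrow> real" where
  "Gc G x = indicator {0<..<1} x * G x + indicator {0} x * G 0 + indicator {1} x * G 1"

lemma dG_meas:
  assumes cv: "convex_on {0..1::real} G" and d: "\<And>x. x \<in> {0<..<1} \<Longrightarrow> G differentiable (at x)"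
  shows "dG G \<in> borel_measurable borel"
proof -
  have "deriv G \<in> borel_measurable (restrict_space borel {0<..<1})"
    by (rule borel_measurable_mono_on_fnc[OF deriv_mono[OF cv d]])
  then have "(\<lambda>x. indicator {0<..<1} x *\<^sub>R deriv G x) \<in> borel_measurable borel"
    by (subst (asm) borel_measurable_restrict_space_iff) auto
  then show ?thesis unfolding dG_def[abs_def] by simp
qed

lemma Gc_meas:
  assumes d: "\<And>x. x \<in> {0<..<1} \<Longrightarrow> G differentiable (at x)"
  shows "Gc G \<in> borel_measurable borel"
proof -
  have "continuous_on {0<..<1} G"
    by (rule differentiable_imp_continuous_on) (use d in \<open>auto simp: differentiable_on_def intro: differentiable_at_withinI\<close>)
  then have "G \<in> borel_measurable (restrict_space borel {0<..<1})"
    by (rule borel_measurable_continuous_on_restrict)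
  then have "(\<lambda>x. indicator {0<..<1} x *\<^sub>R G x) \<in> borel_measurable borel"
    by (subst (asm) borel_measurable_restrict_space_iff) auto
  then show ?thesis unfolding Gc_def[abs_def] by simp
qed

lemma Gc_eq: "x \<in> {0..1} \<Longrightarrow> Gc G x = G x"
  by (cases "x = 0"; cases "x = 1") (auto simp: Gc_def indicator_def)

lemma Gc_bound: "(\<And>x. x \<in> {0..1} \<Longrightarrow> \<bar>G x\<bar> \<le> B) \<Longrightarrow> B \<ge> 0 \<Longrightarrow> \<bar>Gc G x\<bar> \<le> B"
  by (cases "x \<in> {0..1}") (auto simp: Gc_eq, auto simp: Gc_def indicator_def)

lemma dG_eq: "x \<in> {0<..<1} \<Longrightarrow> dG G x = deriv G x"
  by (simp add: dG_def)

lemma absb: "\<bar>g\<bar> \<le> (n::real) \<Longrightarrow> 0 \<le> z \<Longrightarrow> z \<le> 1 \<Longrightarrow> \<bar>g * z\<bar> \<le> n"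
  by (simp add: abs_mult, meson abs_ge_zero mult_left_le order_trans)

lemma mainbound:
  fixes M F :: "'w measure"
  assumes P: "prob_space M" and sub: "subalgebra M F"
    and ZM[measurable]: "Z \<in> borel_measurable M" and mF: "m \<in> borel_measurable F"
    and qM[measurable]: "q \<in> borel_measurable M"
    and EM[measurable]: "E \<in> sets M"
    and Zb: "AE w in M. 0 \<le> Z w \<and> Z w \<le> 1" and mb: "AE w in M. 0 \<le> m w \<and> m w \<le> 1"
    and qb: "AE w in M. 0 \<le> q w \<and> q w \<le> 1"
    and qi: "integrable M q" and qint: "(\<integral>w. q w \<partial>M) = measure M (space M - E)"
    and near: "AE w in M. w \<in> E \<longrightarrow> \<bar>Z w - m w\<bar> \<le> q w"
    and bd: "AE w in M. (m w = 0 \<longrightarrow> Z w = 0) \<and> (m w = 1 \<longrightarrow> Z w = 1)"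
    and orth: "\<And>g C. g \<in> borel_measurable F \<Longrightarrow> (\<And>w. \<bar>g w\<bar> \<le> C) \<Longrightarrow>
                  (\<integral>w. g w * Z w \<partial>M) = (\<integral>w. g w * m w \<partial>M)"
    and cv: "convex_on {0..1} G" and d: "\<And>x. x \<in> {0<..<1} \<Longrightarrow> G differentiable (at x)"
    and GB: "\<And>x. x \<in> {0..1} \<Longrightarrow> \<bar>G x\<bar> \<le> B" and B0: "B \<ge> 0"
    and hc: "concave_on {0..} h" and hmaj: "\<And>t. t \<ge> 0 \<Longrightarrow> Gtilde G t \<le> h t"
  shows "(\<integral>\<^sup>+ w. ennreal (bregman G (Z w) (m w)) \<partial>M) \<le> ennreal (2 * h (measure M (space M - E)))"
proof -
  interpret prob_space M by fact
  have fm: "finite_measure M" by (simp add: finite_measure_axioms)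
  have mM[measurable]: "m \<in> borel_measurable M" by (rule measurable_from_subalg[OF sub mF])
  note [measurable] = dG_meas[OF cv d] Gc_meas[OF d]
  define Q where "Q = measure M (space M - E)"
  have Q0: "0 \<le> Q" and Q1: "Q \<le> 1" unfolding Q_def by (auto simp: prob_le_1)
  have "\<exists>c. AE w in M. h (q w) \<le> h Q + c * (q w - Q)"
  proof (cases "Q = 0")
    case True
    have "AE w in M. q w = 0"
      using integral_nonneg_eq_0_iff_AE[OF qi] qb qint True unfolding Q_def by auto
    then have "AE w in M. h (q w) \<le> h Q + 0 * (q w - Q)" by eventually_elim (simp add: True)
    then show ?thesis by blast
  next
    case False
    then have Qp: "Q > 0" using Q0 by simp
    have cvx: "convex_on {0..} (\<lambda>x. - h x)" using hc unfolding concave_on_def .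
    define c0 where "c0 = Inf ((\<lambda>t. (- h Q - - h t) / (Q - t)) ` ({Q<..} \<inter> {0..}))"
    have hy: "h y \<le> h Q + (- c0) * (y - Q)" if "y \<ge> 0" for y
      using convex_le_Inf_differential[OF cvx, of Q y] Qp that unfolding c0_def by auto
    have "AE w in M. h (q w) \<le> h Q + (- c0) * (q w - Q)"
      using qb by eventually_elim (rule hy, simp)
    then show ?thesis by blast
  qed
  then obtain c where hcb: "AE w in M. h (q w) \<le> h Q + c * (q w - Q)" by blast
  define g1 where "g1 = Gtilde G 1"
  have g10: "0 \<le> g1" unfolding g1_def using Gtilde_nonneg[where G=G and B=B and x=1, OF GB] by simp
  have h0: "0 \<le> h 0" using Gtilde_nonneg[where G=G and B=B and x=0, OF GB] hmaj[of 0] by simp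
  have h1: "g1 \<le> h 1" using hmaj[of 1] unfolding g1_def by simp
  have hQ: "Q * g1 \<le> h Q"
  proof -
    have "(1 - Q) * h 0 + Q * h 1 \<le> h ((1 - Q) *\<^sub>R 0 + Q *\<^sub>R 1)"
      by (rule concave_onD[OF hc]) (use Q0 Q1 in auto)
    then have "(1 - Q) * h 0 + Q * h 1 \<le> h Q" by simp
    moreover have "0 \<le> (1 - Q) * h 0" using Q1 h0 by simp
    moreover have "Q * g1 \<le> Q * h 1" using h1 Q0 by (simp add: mult_left_mono)
    ultimately show ?thesis by linarith
  qed
  define RHS where "RHS w = g1 * indicator (space M - E) w + (h Q - c * Q) + c * q w" for w
  have RHSM[measurable]: "RHS \<in> borel_measurable M" unfolding RHS_def by measurable
  have iEc: "integrable M (indicator (space M - E) :: _ \<Rightarrow> real)" by (rule bint[OF fm, of _ 1]) auto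
  have RHSi: "integrable M RHS"
    unfolding RHS_def using qi iEc by (intro Bochner_Integration.integrable_add integrable_mult_right) auto
  have RHSint: "(\<integral>w. RHS w \<partial>M) \<le> 2 * h Q"
  proof -
    have "(\<integral>w. RHS w \<partial>M) = g1 * Q + (h Q - c * Q) + c * Q"
      unfolding RHS_def using qi qint iEc
      by (subst Bochner_Integration.integral_add; (subst Bochner_Integration.integral_add)?)
         (auto simp: Q_def prob_space)
    then show ?thesis using hQ by (simp add: algebra_simps)
  qed
  have Phi: "AE w in M. Gc G (Z w) - Gc G (m w) \<le> RHS w \<and> 0 \<le> RHS w"
    using Zb mb qb near hcb AE_space
  proof eventually_elim
    case (elim w)
    have Z01: "Z w \<in> {0..1}" and m01: "m w \<in> {0..1}" using elim by auto
    have L: "Gtilde G (q w) \<le> h Q + c * (q w - Q)" using hmaj[of "q w"] elim(3,5) by auto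
    have L0: "0 \<le> Gtilde G (q w)" using Gtilde_nonneg[where G=G and B=B and x="q w", OF GB] elim(3) by auto
    have "Gc G (Z w) - Gc G (m w) = G (Z w) - G (m w)" using Z01 m01 by (simp add: Gc_eq)
    moreover have "G (Z w) - G (m w) \<le> RHS w"
    proof (cases "w \<in> E")
      case True
      have "G (Z w) - G (m w) \<le> Gtilde G (q w)"
        by (rule Gtilde_upper[where G=G and B=B, OF GB Z01 m01]) (use elim(4) True in auto)
      then show ?thesis using L True by (simp add: RHS_def algebra_simps)
    next
      case False
      have "G (Z w) - G (m w) \<le> Gtilde G 1"
        by (rule Gtilde_upper[where G=G and B=B, OF GB Z01 m01]) (use Z01 m01 in auto)
      then show ?thesis using L L0 False elim(6) by (simp add: RHS_def g1_def algebra_simps)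
    qed
    moreover have "0 \<le> RHS w"
      using L L0 g10 by (cases "w \<in> E") (simp_all add: RHS_def algebra_simps indicator_def)
    ultimately show ?case by simp
  qed
  define D where "D w = Gc G (Z w) - Gc G (m w) - (Z w - m w) * dG G (m w)" for w
  have DM[measurable]: "D \<in> borel_measurable M" unfolding D_def by measurable
  have Deq: "AE w in M. bregman G (Z w) (m w) = D w \<and> 0 \<le> D w"
    using Zb mb bd
  proof eventually_elim
    case (elim w)
    have Z01: "Z w \<in> {0..1}" and m01: "m w \<in> {0..1}" using elim by auto
    show ?case
    proof (cases "m w \<in> {0<..<1}")
      case True
      have "bregman G (Z w) (m w) = D w"
        using Z01 m01 True by (simp add: bregman_def D_def Gc_eq dG_eq)
      moreover have "deriv G (m w) * (Z w - m w) \<le> G (Z w) - G (m w)"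
        by (rule tang[OF cv d True Z01])
      ultimately show ?thesis using Z01 m01 True by (simp add: D_def Gc_eq dG_eq algebra_simps)
    next
      case False
      then have "m w = 0 \<or> m w = 1" using m01 by auto
      then have "Z w = m w" using elim(3) by auto
      then show ?thesis by (simp add: bregman_def D_def)
    qed
  qed
  define T where "T n w = (if \<bar>dG G (m w)\<bar> \<le> real n then 1 else 0 :: real)" for n w
  have TF: "T n \<in> borel_measurable F" for n
    unfolding T_def using mF by measurable
  have TM[measurable]: "T n \<in> borel_measurable M" for n
    by (rule measurable_from_subalg[OF sub TF])
  have step1: "(\<integral>\<^sup>+ w. ennreal (bregman G (Z w) (m w)) \<partial>M) = (\<integral>\<^sup>+ w. ennreal (D w) \<partial>M)"
    by (rule nn_integral_cong_AE) (use Deq in \<open>eventually_elim, simp\<close>)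
  have step2: "(\<integral>\<^sup>+ w. ennreal (D w) \<partial>M) = (\<integral>\<^sup>+ w. (SUP n. ennreal (D w * T n w)) \<partial>M)"
  proof (rule nn_integral_cong)
    fix w
    show "ennreal (D w) = (SUP n. ennreal (D w * T n w))"
    proof (rule antisym)
      define n0 where "n0 = nat \<lceil>\<bar>dG G (m w)\<bar>\<rceil>"
      have "T n0 w = 1" unfolding T_def n0_def by (simp add: real_nat_ceiling_ge)
      then show "ennreal (D w) \<le> (SUP n. ennreal (D w * T n w))"
        by (intro SUP_upper2[of n0]) auto
      show "(SUP n. ennreal (D w * T n w)) \<le> ennreal (D w)"
      proof (rule SUP_least)
        fix n show "ennreal (D w * T n w) \<le> ennreal (D w)"
          by (cases "0 \<le> D w") (auto simp: T_def intro: ennreal_leI ennreal_neg)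
      qed
    qed
  qed
  have inc: "incseq (\<lambda>n w. ennreal (D w * T n w))"
  proof (rule incseq_SucI, rule le_funI)
    fix n w
    show "ennreal (D w * T n w) \<le> ennreal (D w * T (Suc n) w)"
      by (cases "0 \<le> D w") (auto simp: T_def intro!: ennreal_leI ennreal_neg)
  qed
  have step3: "(\<integral>\<^sup>+ w. (SUP n. ennreal (D w * T n w)) \<partial>M) = (SUP n. \<integral>\<^sup>+ w. ennreal (D w * T n w) \<partial>M)"
    by (rule nn_integral_monotone_convergence_SUP[OF inc]) measurable
  have step4: "(\<integral>\<^sup>+ w. ennreal (D w * T n w) \<partial>M) \<le> ennreal (2 * h Q)" for n
  proof -
    define gn where "gn w = dG G (m w) * T n w" for w
    have gnF: "gn \<in> borel_measurable F" unfolding gn_def using mF TF by measurable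
    have gnM[measurable]: "gn \<in> borel_measurable M" by (rule measurable_from_subalg[OF sub gnF])
    have gnb: "\<bar>gn w\<bar> \<le> real n" for w by (simp add: gn_def T_def)
    have GZb: "\<bar>Gc G x\<bar> \<le> B" for x by (rule Gc_bound[OF GB B0])
    have b1: "\<bar>(Gc G (Z w) - Gc G (m w)) * T n w\<bar> \<le> 2 * B" for w
      using GZb[of "Z w"] GZb[of "m w"] B0 unfolding abs_le_iff T_def by auto
    have i1: "integrable M (\<lambda>w. (Gc G (Z w) - Gc G (m w)) * T n w)"
      by (rule bint[OF fm, of _ "2 * B"], measurable) (rule AE_I2, rule b1)
    have i2: "integrable M (\<lambda>w. gn w * Z w)"
      by (rule bint[OF fm, of _ "real n"], measurable)
         (use Zb in \<open>eventually_elim, auto intro: absb[OF gnb]\<close>)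
    have i3: "integrable M (\<lambda>w. gn w * m w)"
      by (rule bint[OF fm, of _ "real n"], measurable)
         (use mb in \<open>eventually_elim, auto intro: absb[OF gnb]\<close>)
    have Dsplit: "D w * T n w = (Gc G (Z w) - Gc G (m w)) * T n w - (gn w * Z w - gn w * m w)" for w
      by (simp add: D_def gn_def algebra_simps)
    have iD: "integrable M (\<lambda>w. D w * T n w)"
      unfolding Dsplit using i1 i2 i3 by auto
    have e1: "(\<integral>\<^sup>+ w. ennreal (D w * T n w) \<partial>M) = ennreal (\<integral>w. D w * T n w \<partial>M)"
      by (rule nn_integral_eq_integral[OF iD]) (use Deq in \<open>eventually_elim, auto simp: T_def\<close>)
    have e2: "(\<integral>w. D w * T n w \<partial>M) = (\<integral>w. (Gc G (Z w) - Gc G (m w)) * T n w \<partial>M) - ((\<integral>w. gn w * Z w \<partial>M) - (\<integral>w. gn w * m w \<partial>M))"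
      unfolding Dsplit using i1 i2 i3 by simp
    have e3: "(\<integral>w. gn w * Z w \<partial>M) = (\<integral>w. gn w * m w \<partial>M)"
      by (rule orth[OF gnF gnb])
    have e4: "(\<integral>w. (Gc G (Z w) - Gc G (m w)) * T n w \<partial>M) \<le> (\<integral>w. RHS w \<partial>M)"
      by (rule integral_mono_AE[OF i1 RHSi]) (use Phi in \<open>eventually_elim, auto simp: T_def\<close>)
    have "(\<integral>w. D w * T n w \<partial>M) \<le> 2 * h Q" using e2 e3 e4 RHSint by linarith
    then show ?thesis unfolding e1 by (rule ennreal_leI)
  qed
  show ?thesis
    unfolding step1 step2 step3 Q_def[symmetric] by (rule SUP_least, rule step4)
qed

theorem lemmaC7:
  fixes M :: "'w measure" and S :: "'s measure" and T :: "'t measure"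
    and sig :: "'w \<Rightarrow> 's" and tau :: "'w \<Rightarrow> 't" and Y :: "'w \<Rightarrow> real"
    and G :: "real \<Rightarrow> real" and I :: "nat \<Rightarrow> real set" and N :: nat
  assumes "prob_space M"
    and "sig \<in> measurable M S" and "tau \<in> measurable M T"
    and "Y \<in> borel_measurable M" and "\<And>w. w \<in> space M \<Longrightarrow> 0 \<le> Y w \<and> Y w \<le> 1"
    and "strictly_convex_on {0..1} G"
    and "\<And>x. x \<in> {0<..<1} \<Longrightarrow> G differentiable (at x)"
    and "\<And>k. k < N \<Longrightarrow> is_interval (I k)"
    and "disjoint_family_on I {..<N}"
    and "(\<Union>k<N. I k) = {0..1}"
  shows
    "let mu_sig = real_cond_exp M (vimage_algebra (space M) sig S) Y;
         mu_tau = real_cond_exp M (vimage_algebra (space M) tau T) Y;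
         mu_Stau = real_cond_exp M
                     (vimage_algebra (space M) (\<lambda>w. (kidx I N (mu_sig w), tau w))
                        (count_space UNIV \<Otimes>\<^sub>M T)) Y;
         Q = measure M {w \<in> space M. kidx I N (mu_sig w) \<noteq> kidx I N (mu_tau w)}
     in (\<integral>\<^sup>+ w. ennreal (bregman G (mu_Stau w) (mu_tau w)) \<partial>M)
          \<le> ennreal (2 * Gtilde_star G Q)"
proof -
  note P = assms(1)
  interpret prob_space M by fact
  have fm: "finite_measure M" by (simp add: finite_measure_axioms)
  note Ym[measurable] = assms(4)
  note Yb = assms(5)
  have tauM[measurable]: "tau \<in> measurable M T" by fact
  have kM[measurable]: "kidx I N \<in> measurable borel (count_space UNIV)"
    by (rule kidx_measurable[OF assms(8,9,10)])
  define ms where "ms = real_cond_exp M (vimage_algebra (space M) sig S) Y"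
  define F where "F = vimage_algebra (space M) tau T"
  define m where "m = real_cond_exp M F Y"
  define K where "K w = kidx I N (ms w)" for w
  define pr where "pr w = (K w, tau w)" for w
  define H where "H = vimage_algebra (space M) pr (count_space UNIV \<Otimes>\<^sub>M T)"
  define Z where "Z = real_cond_exp M H Y"
  define E where "E = {w \<in> space M. K w = kidx I N (m w)}"
  have msM[measurable]: "ms \<in> borel_measurable M" unfolding ms_def by simp
  have KM[measurable]: "K \<in> measurable M (count_space UNIV)" unfolding K_def[abs_def] by measurable
  have prM: "pr \<in> measurable M (count_space UNIV \<Otimes>\<^sub>M T)" unfolding pr_def[abs_def] by measurable
  have prS: "pr \<in> space M \<rightarrow> space (count_space UNIV \<Otimes>\<^sub>M T)"
    using measurable_space[OF prM] by blast
  have tauS: "tau \<in> space M \<rightarrow> space T" using measurable_space[OF tauM] by blast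
  have sF: "sigma_finite_subalgebra M F" unfolding F_def by (rule vimage_subalg[OF P tauM])
  have sH: "sigma_finite_subalgebra M H" unfolding H_def by (rule vimage_subalg[OF P prM])
  interpret Fs: sigma_finite_subalgebra M F by (rule sF)
  interpret Hs: sigma_finite_subalgebra M H by (rule sH)
  have spF: "space F = space M" and spH: "space H = space M" by (simp_all add: F_def H_def)
  have FH: "sets F \<subseteq> sets H"
  proof
    fix A assume "A \<in> sets F"
    then obtain C where C: "C \<in> sets T" "A = tau -` C \<inter> space M"
      unfolding F_def sets_vimage_algebra2[OF tauS] by blast
    have "A = pr -` (UNIV \<times> C) \<inter> space M" using C by (auto simp: pr_def)
    moreover have "UNIV \<times> C \<in> sets (count_space UNIV \<Otimes>\<^sub>M T)" using C by auto
    ultimately show "A \<in> sets H" unfolding H_def using in_vimage_algebra by metis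
  qed
  have measFH: "f \<in> measurable H N'" if "f \<in> measurable F N'" for f and N' :: "'x measure"
    using measurable_mono[of N' N' F H] FH spF spH that by auto
  have mF: "m \<in> borel_measurable F" unfolding m_def by simp
  have mM[measurable]: "m \<in> borel_measurable M" unfolding m_def by simp
  have prH: "pr \<in> measurable H (count_space UNIV \<Otimes>\<^sub>M T)"
    unfolding H_def by (rule measurable_vimage_algebra1[OF prS])
  have KH: "K \<in> measurable H (count_space UNIV)"
  proof -
    have "(\<lambda>w. fst (pr w)) \<in> measurable H (count_space UNIV)"
      using measurable_compose[OF prH measurable_fst] by (simp add: space_pair_measure)
    then show ?thesis by (simp add: pr_def)
  qed
  have kmF: "(\<lambda>w. kidx I N (m w)) \<in> measurable F (count_space UNIV)"
    by (rule measurable_compose[OF mF kM])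
  have kmH: "(\<lambda>w. kidx I N (m w)) \<in> measurable H (count_space UNIV)" by (rule measFH[OF kmF])
  have EH: "E \<in> sets H"
  proof -
    have "E = (\<Union>k. (K -` {k} \<inter> space H) \<inter> ((\<lambda>w. kidx I N (m w)) -` {k} \<inter> space H))"
      by (auto simp: E_def spH)
    moreover have "(K -` {k} \<inter> space H) \<inter> ((\<lambda>w. kidx I N (m w)) -` {k} \<inter> space H) \<in> sets H" for k
      using measurable_sets[OF KH, of "{k}"] measurable_sets[OF kmH, of "{k}"] by auto
    ultimately show ?thesis by auto
  qed
  have tr: "\<exists>B\<in>sets F. A \<inter> E = B \<inter> E" if A: "A \<in> sets H" for A
  proof -
    obtain C where C: "C \<in> sets (count_space UNIV \<Otimes>\<^sub>M T)" "A = pr -` C \<inter> space M"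
      using A unfolding H_def sets_vimage_algebra2[OF prS] by blast
    have tauF: "tau \<in> measurable F T" unfolding F_def by (rule measurable_vimage_algebra1[OF tauS])
    have pr'F: "(\<lambda>w. (kidx I N (m w), tau w)) \<in> measurable F (count_space UNIV \<Otimes>\<^sub>M T)"
      by (rule measurable_Pair[OF kmF tauF])
    define B where "B = (\<lambda>w. (kidx I N (m w), tau w)) -` C \<inter> space M"
    have "B \<in> sets F" unfolding B_def using measurable_sets[OF pr'F C(1)] spF by simp
    moreover have "A \<inter> E = B \<inter> E" using C(2) by (auto simp: B_def E_def pr_def)
    ultimately show ?thesis by blast
  qed
  have near: "AE w in M. w \<in> E \<longrightarrow> \<bar>Z w - m w\<bar> \<le> real_cond_exp M F (indicator (space M - E)) w"
    unfolding Z_def m_def by (rule core[OF P sF sH FH Ym Yb EH tr])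
  have bd: "AE w in M. (m w = 0 \<longrightarrow> Z w = 0) \<and> (m w = 1 \<longrightarrow> Z w = 1)"
    unfolding Z_def m_def by (rule boundary[OF P sF sH FH Ym Yb])
  define q where "q = real_cond_exp M F (indicator (space M - E))"
  have EM[measurable]: "E \<in> sets M" using EH Hs.subalg unfolding subalgebra_def by auto
  have iY: "integrable M Y" by (rule bint[OF fm Ym, of 1]) (use Yb in auto)
  have iEc: "integrable M (indicator (space M - E) :: _ \<Rightarrow> real)" by (rule bint[OF fm, of _ 1]) auto
  have Zb: "AE w in M. 0 \<le> Z w \<and> Z w \<le> 1"
    using Hs.real_cond_exp_ge_c[OF iY, of 0] Hs.real_cond_exp_le_c[OF iY, of 1] Yb unfolding Z_def by auto
  have mb: "AE w in M. 0 \<le> m w \<and> m w \<le> 1"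
    using Fs.real_cond_exp_ge_c[OF iY, of 0] Fs.real_cond_exp_le_c[OF iY, of 1] Yb unfolding m_def by auto
  have qb: "AE w in M. 0 \<le> q w \<and> q w \<le> 1"
    using Fs.real_cond_exp_ge_c[OF iEc, of 0] Fs.real_cond_exp_le_c[OF iEc, of 1] unfolding q_def by auto
  have qi: "integrable M q" unfolding q_def by (rule Fs.real_cond_exp_int(1)[OF iEc])
  have qint: "(\<integral>w. q w \<partial>M) = measure M (space M - E)"
    unfolding q_def Fs.real_cond_exp_int(2)[OF iEc] by (simp add: Int_absorb2)
  have orth: "(\<integral>w. g w * Z w \<partial>M) = (\<integral>w. g w * m w \<partial>M)"
    if g: "g \<in> borel_measurable F" and gb: "\<And>w. \<bar>g w\<bar> \<le> C" for g C
  proof -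
    have gM[measurable]: "g \<in> borel_measurable M" by (rule measurable_from_subalg[OF Fs.subalg g])
    have igY: "integrable M (\<lambda>w. g w * Y w)"
      by (rule bint[OF fm, of _ C], measurable) (rule AE_I2, use gb Yb in \<open>auto intro: absb\<close>)
    have "(\<integral>w. g w * Z w \<partial>M) = (\<integral>w. g w * Y w \<partial>M)"
      unfolding Z_def by (rule Hs.real_cond_exp_intg(2)[OF igY measFH[OF g] Ym])
    also have "\<dots> = (\<integral>w. g w * m w \<partial>M)"
      unfolding m_def by (rule Fs.real_cond_exp_intg(2)[symmetric, OF igY g Ym])
    finally show ?thesis .
  qed
  have cv: "convex_on {0..1} G" by (rule sc_convex[OF assms(6)])
  obtain B where B0: "B \<ge> 0" and GB: "\<And>x. x \<in> {0..1} \<Longrightarrow> \<bar>G x\<bar> \<le> B"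
    using G_bounded[OF cv] by blast
  define X where "X = (\<integral>\<^sup>+ w. ennreal (bregman G (Z w) (m w)) \<partial>M)"
  define Q where "Q = measure M (space M - E)"
  have Q0: "0 \<le> Q" unfolding Q_def by simp
  have bnd: "X \<le> ennreal (2 * h Q)" if hc: "concave_on {0..} h" and hm: "\<forall>t\<ge>0. Gtilde G t \<le> h t" for h
    unfolding X_def Q_def
    by (rule mainbound[OF P Fs.subalg _ mF _ EM Zb mb qb qi qint near[folded q_def] bd orth cv assms(7) GB B0 hc])
       (use hm in \<open>auto simp: Z_def q_def\<close>)
  define V where "V = {h Q | h. concave_on {0..} h \<and> (\<forall>t\<ge>0. Gtilde G t \<le> h t)}"
  have Vne: "V \<noteq> {}"
  proof -
    have "concave_on {0..} (\<lambda>_::real. 2 * B) \<and> (\<forall>t\<ge>0. Gtilde G t \<le> (\<lambda>_::real. 2 * B) t)"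
      using Gtilde_le[where G=G and B=B, OF GB] by (auto simp: concave_on_const convex_real_interval)
    then show ?thesis unfolding V_def by blast
  qed
  have Vpos: "0 \<le> v" if "v \<in> V" for v
    using that Gtilde_nonneg[where G=G and B=B and x=Q, OF GB] Q0 unfolding V_def by force
  have XV: "X \<le> ennreal (2 * v)" if "v \<in> V" for v
    using that bnd unfolding V_def by blast
  obtain v0 where v0: "v0 \<in> V" using Vne by blast
  have "X < \<top>" using XV[OF v0] by (simp add: le_less_trans)
  then obtain x where x: "X = ennreal x" "0 \<le> x" by (cases X) auto
  have "x / 2 \<le> Inf V"
  proof (rule cInf_greatest[OF Vne])
    fix v assume v: "v \<in> V"
    have "ennreal x \<le> ennreal (2 * v)" using XV[OF v] x by simp
    then have "x \<le> 2 * v" using Vpos[OF v] by (simp add: ennreal_le_iff)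
    then show "x / 2 \<le> v" by simp
  qed
  then have "X \<le> ennreal (2 * Gtilde_star G Q)"
    unfolding x(1) Gtilde_star_def V_def[symmetric] by (intro ennreal_leI) simp
  moreover have "{w \<in> space M. kidx I N (ms w) \<noteq> kidx I N (m w)} = space M - E"
    by (auto simp: E_def K_def)
  ultimately show ?thesis
    unfolding Let_def X_def Q_def Z_def H_def pr_def K_def m_def F_def ms_def by simp
qed

end
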